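(* Consider the discrete Motsch–Tadmor model described in the context, under the standing assumptions stated there. Suppose the initial data $(X(0),V(0))$ and the coupling strength $\kappa$ satisfy \[ \|\Delta^x(0)\|_F < M \quad\text{and}\quad \|\Delta^v(0)\|_F < \kappa \int_{\|\Delta^x(0)\|_F}^{M} \psi(s)\,ds , \] and let $(X(n),V(n))_{n\ge 0}$ be the solution of the discrete model with this initial data. Then: (i) $\sup_{0\le n<\infty} \|\Delta^x(n)\|_F \le M$; (ii) for any constant $0<C<1$, for all sufficiently small time-steps $h>0$ one has \[ \|\Delta^v(n)\|_F \le \|\Delta^v(0)\|_F\, e^{-C\kappa\psi(M) n h}\qquad \text{for all } n\ge 0 . \]
   Context: Discrete Motsch–Tadmor (MT) model: fix integers $N\ge1$, $d\ge1$, a coupling strength $\kappa>0$, a time-step $h>0$, and a communication function $a:[0,\infty)\to\mathbb{R}$. Standing assumptions: there are constants $0<c_1\le c_2$ with $c_1\le a(r)\le c_2$ for all $r\ge0$; $a$ is Lipschitz with constant $L_a>0$, i.e. $|a(r_1)-a(r_2)|\le L_a|r_1-r_2|$ for $r_1,r_2\ge0$; and $0<h<\min\{1,1/\kappa\}$. A solution is a sequence $(X(n),V(n))_{n\ge0}$ with $X(n)=(x_1(n),\dots,x_N(n))$, $V(n)=(v_1(n),\dots,v_N(n))\in(\mathbb{R}^d)^N$ satisfying, for $i=1,\dots,N$ and $n\ge0$, $x_i(n+1)=x_i(n)+h v_i(n)$, $v_i(n+1)=v_i(n)+h\kappa\sum_{j=1}^N\phi_{ij}(n)(v_j(n)-v_i(n))$,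 where $\phi_{ij}(n)=\frac{a(\|x_i(n)-x_j(n)\|)}{\sum_{k=1}^N a(\|x_i(n)-x_k(n)\|)}$ and $\|\cdot\|$ is the Euclidean norm. Notation: $\Delta^x_{ij}(n)=x_i(n)-x_j(n)$, $\Delta^v_{ij}(n)=v_i(n)-v_j(n)$, $\|\Delta^x(n)\|_F=(\sum_{i,j=1}^N\|\Delta^x_{ij}(n)\|^2)^{1/2}$, $\|\Delta^v(n)\|_F=(\sum_{i,j=1}^N\|\Delta^v_{ij}(n)\|^2)^{1/2}$. Constants: $\|\phi\|_{\mathrm{Lip}}:=\frac{L_a}{Nc_1}\left(1+\frac{c_2}{c_1}\right)$, $M:=\frac{1}{4N\|\phi\|_{\mathrm{Lip}}}$, and $\psi(s):=1-\|\phi\|_{\mathrm{Lip}}Ns$. *)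

theory Defs
  imports "HOL-Analysis.Analysis"
begin

text \<open>Agents are indexed by i < N; positions and velocities live in real^'d
  (Euclidean norm). A configuration is a map nat => real^'d (only i < N matter).\<close>

definition phi_lip :: "nat \<Rightarrow> real \<Rightarrow> real \<Rightarrow> real \<Rightarrow> real" where
  "phi_lip N c1 c2 La = La / (real N * c1) * (1 + c2 / c1)"

definition M_const :: "nat \<Rightarrow> real \<Rightarrow> real \<Rightarrow> real \<Rightarrow> real" where
  "M_const N c1 c2 La = 1 / (4 * real N * phi_lip N c1 c2 La)"

definition psi :: "nat \<Rightarrow> real \<Rightarrow> real \<Rightarrow> real \<Rightarrow> real \<Rightarrow> real" where
  "psi N c1 c2 La s = 1 - phi_lip N c1 c2 La * real N * s"

definition frob_diff :: "nat \<Rightarrow> (nat \<Rightarrow> real ^ 'd) \<Rightarrow> real" where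
  "frob_diff N Y = sqrt (\<Sum>i<N. \<Sum>j<N. (norm (Y i - Y j))\<^sup>2)"

definition phi_w :: "nat \<Rightarrow> (real \<Rightarrow> real) \<Rightarrow> (nat \<Rightarrow> real ^ 'd) \<Rightarrow> nat \<Rightarrow> nat \<Rightarrow> real" where
  "phi_w N a Xn i j = a (norm (Xn i - Xn j)) / (\<Sum>k<N. a (norm (Xn i - Xn k)))"

definition MT_solution ::
  "nat \<Rightarrow> real \<Rightarrow> real \<Rightarrow> (real \<Rightarrow> real) \<Rightarrow> (nat \<Rightarrow> nat \<Rightarrow> real ^ 'd) \<Rightarrow> (nat \<Rightarrow> nat \<Rightarrow> real ^ 'd) \<Rightarrow> bool" where
  "MT_solution N \<kappa> h a X V \<longleftrightarrow>
     (\<forall>n. \<forall>i<N. X (Suc n) i = X n i + h *\<^sub>R V n i \<and>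
        V (Suc n) i = V n i + (h * \<kappa>) *\<^sub>R (\<Sum>j<N. phi_w N a (X n) i j *\<^sub>R (V n j - V n i)))"

end

theory Submission
  imports Defs
begin


lemma frob_L2: "frob_diff N Y = L2_set (\<lambda>(i,j). norm (Y i - Y j)) ({..<N}\<times>{..<N})"
  unfolding frob_diff_def L2_set_def
  by (simp add: sum.cartesian_product case_prod_unfold)

lemma L2_prod_le:
  assumes "\<And>i j. i<N \<Longrightarrow> j<N \<Longrightarrow> 0 \<le> f i j \<and> f i j \<le> g i j"
  shows "L2_set (\<lambda>(i,j). f i j) ({..<N}\<times>{..<N}) \<le> L2_set (\<lambda>(i,j). g i j) ({..<N}\<times>{..<N})"
  by (rule L2_set_mono) (use assms in auto)

lemma frob_x_step:
  fixes Y W :: "nat \<Rightarrow> real ^ 'd"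
  assumes "h \<ge> 0"
  shows "frob_diff N (\<lambda>i. Y i + h *\<^sub>R W i) \<le> frob_diff N Y + h * frob_diff N W"
proof -
  have "frob_diff N (\<lambda>i. Y i + h *\<^sub>R W i) \<le>
     L2_set (\<lambda>(i,j). norm (Y i - Y j) + h * norm (W i - W j)) ({..<N}\<times>{..<N})"
    unfolding frob_L2
  proof (rule L2_prod_le)
    fix i j
    have "norm (Y i + h *\<^sub>R W i - (Y j + h *\<^sub>R W j)) = norm ((Y i - Y j) + h *\<^sub>R (W i - W j))"
      by (simp add: algebra_simps)
    also have "\<dots> \<le> norm (Y i - Y j) + h * norm (W i - W j)"
      using norm_triangle_ineq[of "Y i - Y j" "h *\<^sub>R (W i - W j)"] assms by simp
    finally show "0 \<le> norm (Y i + h *\<^sub>R W i - (Y j + h *\<^sub>R W j)) \<and>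
        norm (Y i + h *\<^sub>R W i - (Y j + h *\<^sub>R W j)) \<le> norm (Y i - Y j) + h * norm (W i - W j)"
      by simp
  qed
  also have "\<dots> \<le> L2_set (\<lambda>(i,j). norm (Y i - Y j)) ({..<N}\<times>{..<N}) + L2_set (\<lambda>(i,j). h * norm (W i - W j)) ({..<N}\<times>{..<N})"
    using L2_set_triangle_ineq[of "\<lambda>(i,j). norm (Y i - Y j)" "\<lambda>(i,j). h * norm (W i - W j)"]
    by (simp add: case_prod_unfold)
  also have "L2_set (\<lambda>(i,j). h * norm (W i - W j)) ({..<N}\<times>{..<N}) = h * frob_diff N W"
    unfolding frob_L2 using L2_set_right_distrib[OF assms, of "\<lambda>(i,j). norm (W i - W j)"]
    by (simp add: case_prod_unfold)
  finally show ?thesis unfolding frob_L2 .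
qed

lemma phi_sum:
  assumes N: "N \<ge> 1" and c: "0 < c1" and a_bd: "\<And>r. r \<ge> 0 \<Longrightarrow> c1 \<le> a r \<and> a r \<le> c2"
  shows "(\<Sum>k<N. phi_w N a Xn i k) = 1"
proof -
  have "(\<Sum>k<N. a (norm (Xn i - Xn k))) \<ge> (\<Sum>k<N. c1)"
    by (rule sum_mono) (use a_bd in auto)
  moreover have "(\<Sum>k<N. c1) > 0" using N c by simp
  ultimately have "(\<Sum>k<N. a (norm (Xn i - Xn k))) > 0" by linarith
  then show ?thesis unfolding phi_w_def by (simp add: sum_divide_distrib[symmetric])
qed



lemma real_phi_bound:
  fixes ai aj Si Sj n c1 c2 L d :: real
  assumes "0 < c1" "c1 \<le> aj" "aj \<le> c2" "n > 0" "n*c1 \<le> Si" "n*c1 \<le> Sj"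
    "\<bar>ai - aj\<bar> \<le> L*d" "\<bar>Si - Sj\<bar> \<le> n*(L*d)"
  shows "\<bar>ai/Si - aj/Sj\<bar> \<le> L / (n*c1) * (1 + c2/c1) * d"
proof -
  have Si: "Si > 0" "Sj > 0" using assms by (smt (verit) mult_pos_pos)+
  have eq: "ai/Si - aj/Sj = (ai-aj)/Si + aj*(Sj-Si)/(Si*Sj)"
    using Si by (simp add: field_simps)
  have Ld: "L*d \<ge> 0" using assms(7) by linarith
  have t1: "\<bar>(ai-aj)/Si\<bar> \<le> L*d/(n*c1)"
  proof -
    have "\<bar>(ai-aj)/Si\<bar> = \<bar>ai-aj\<bar>/Si" using Si by (simp only: abs_divide abs_of_pos)
    also have "\<dots> \<le> L*d/Si" using Si assms(7) by (simp add: divide_right_mono)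
    also have "\<dots> \<le> L*d/(n*c1)" using Ld assms Si by (intro divide_left_mono) auto
    finally show ?thesis .
  qed
  have "\<bar>aj*(Sj-Si)/(Si*Sj)\<bar> = aj*\<bar>Sj-Si\<bar>/(Si*Sj)"
    using Si assms by (simp only: abs_divide abs_mult abs_of_pos)
  also have "\<dots> \<le> c2*(n*(L*d))/((n*c1)*(n*c1))"
  proof (rule frac_le)
    show "0 \<le> c2 * (n * (L * d))" using assms Ld by simp
    show "aj * \<bar>Sj - Si\<bar> \<le> c2 * (n * (L * d))"
      using assms by (intro mult_mono) (auto simp: abs_minus_commute)
    show "0 < n * c1 * (n * c1)" using assms by simp
    show "n * c1 * (n * c1) \<le> Si * Sj" using assms Si by (intro mult_mono) auto
  qed
  also have "\<dots> = L*d*c2/(n*c1*c1)" using assms by (simp add: field_simps)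
  finally have t2: "\<bar>aj*(Sj-Si)/(Si*Sj)\<bar> \<le> L*d*c2/(n*c1*c1)" .
  have "\<bar>ai/Si - aj/Sj\<bar> \<le> L*d/(n*c1) + L*d*c2/(n*c1*c1)"
    unfolding eq by (rule order_trans[OF abs_triangle_ineq add_mono[OF t1 t2]])
  also have "\<dots> = L / (n*c1) * (1 + c2/c1) * d" using assms by (simp add: field_simps)
  finally show ?thesis .
qed

lemma phi_diff:
  fixes Xn :: "nat \<Rightarrow> real ^ 'd"
  assumes N: "N \<ge> 1" and c: "0 < c1" and a_bd: "\<And>r. r \<ge> 0 \<Longrightarrow> c1 \<le> a r \<and> a r \<le> c2"
    and a_lip: "\<And>r1 r2. r1 \<ge> 0 \<Longrightarrow> r2 \<ge> 0 \<Longrightarrow> \<bar>a r1 - a r2\<bar> \<le> La * \<bar>r1 - r2\<bar>"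
    and La: "La \<ge> 0"
  shows "\<bar>phi_w N a Xn i k - phi_w N a Xn j k\<bar> \<le> phi_lip N c1 c2 La * norm (Xn i - Xn j)"
proof -
  have rt: "\<bar>norm (Xn i - Xn m) - norm (Xn j - Xn m)\<bar> \<le> norm (Xn i - Xn j)" for m
    using norm_triangle_ineq3[of "Xn i - Xn m" "Xn j - Xn m"] by simp
  have lip: "\<bar>a (norm (Xn i - Xn m)) - a (norm (Xn j - Xn m))\<bar> \<le> La * norm (Xn i - Xn j)" for m
  proof -
    have "\<bar>a (norm (Xn i - Xn m)) - a (norm (Xn j - Xn m))\<bar> \<le> La * \<bar>norm (Xn i - Xn m) - norm (Xn j - Xn m)\<bar>"
      by (rule a_lip) auto
    also have "\<dots> \<le> La * norm (Xn i - Xn j)"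
      using rt[of m] La by (simp add: mult_left_mono)
    finally show ?thesis .
  qed
  define Si where "Si = (\<Sum>m<N. a (norm (Xn i - Xn m)))"
  define Sj where "Sj = (\<Sum>m<N. a (norm (Xn j - Xn m)))"
  have Sil: "real N * c1 \<le> Si" unfolding Si_def
    using sum_mono[of "{..<N}" "\<lambda>_. c1" "\<lambda>m. a (norm (Xn i - Xn m))"] a_bd by auto
  have Sjl: "real N * c1 \<le> Sj" unfolding Sj_def
    using sum_mono[of "{..<N}" "\<lambda>_. c1" "\<lambda>m. a (norm (Xn j - Xn m))"] a_bd by auto
  have "\<bar>Si - Sj\<bar> \<le> (\<Sum>m<N. \<bar>a (norm (Xn i - Xn m)) - a (norm (Xn j - Xn m))\<bar>)"
    unfolding Si_def Sj_def sum_subtractf[symmetric] by (rule sum_abs)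
  also have "\<dots> \<le> (\<Sum>m<N. La * norm (Xn i - Xn j))" by (rule sum_mono) (rule lip)
  finally have SS: "\<bar>Si - Sj\<bar> \<le> real N * (La * norm (Xn i - Xn j))" by simp
  have "\<bar>a (norm (Xn i - Xn k))/Si - a (norm (Xn j - Xn k))/Sj\<bar>
     \<le> La / (real N*c1) * (1 + c2/c1) * norm (Xn i - Xn j)"
    by (rule real_phi_bound[OF c _ _ _ Sil Sjl lip SS]) (use a_bd N in auto)
  then show ?thesis unfolding phi_w_def phi_lip_def Si_def Sj_def .
qed



definition F2 :: "nat \<Rightarrow> (nat \<Rightarrow> nat \<Rightarrow> real) \<Rightarrow> real" where
  "F2 N e = sqrt (\<Sum>i<N. \<Sum>j<N. (e i j)\<^sup>2)"

lemma F2_L2: "F2 N e = L2_set (\<lambda>(i,j). e i j) ({..<N}\<times>{..<N})"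
  unfolding F2_def L2_set_def by (simp add: sum.cartesian_product case_prod_unfold)

lemma F2_nonneg: "F2 N e \<ge> 0" unfolding F2_L2 by simp

lemma col_le: "j < N \<Longrightarrow> (\<Sum>k<N. (e k j)\<^sup>2) \<le> (F2 N e)\<^sup>2"
proof -
  assume j: "j < N"
  have "(\<Sum>k<N. (e k j)\<^sup>2) \<le> (\<Sum>k<N. \<Sum>m<N. (e k m)\<^sup>2)"
    by (rule sum_mono) (rule member_le_sum, use j in auto)
  also have "\<dots> = (F2 N e)\<^sup>2" unfolding F2_def
    by (simp add: sum_nonneg)
  finally show ?thesis .
qed

lemma F2_agg:
  fixes r e d :: "nat \<Rightarrow> nat \<Rightarrow> real"
  assumes ab: "\<alpha> \<ge> 0" "\<beta> \<ge> 0"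
    and e0: "\<And>i j. e i j \<ge> 0" and d0: "\<And>i j. d i j \<ge> 0"
    and r: "\<And>i j. i < N \<Longrightarrow> j < N \<Longrightarrow> 0 \<le> r i j \<and> r i j \<le> \<alpha> * e i j + \<beta> * (d i j * (\<Sum>k<N. e k j))"
  shows "F2 N r \<le> \<alpha> * F2 N e + \<beta> * (sqrt (real N) * F2 N d * F2 N e)"
proof -
  define s where "s j = (\<Sum>k<N. e k j)" for j
  have s0: "s j \<ge> 0" for j unfolding s_def using e0 by (simp add: sum_nonneg)
  have "F2 N r \<le> L2_set (\<lambda>(i,j). \<alpha> * e i j + \<beta> * (d i j * s j)) ({..<N}\<times>{..<N})"
    unfolding F2_L2 by (rule L2_set_mono) (use r in \<open>auto simp: s_def\<close>)
  also have "\<dots> \<le> L2_set (\<lambda>(i,j). \<alpha> * e i j) ({..<N}\<times>{..<N}) + L2_set (\<lambda>(i,j). \<beta> * (d i j * s j)) ({..<N}\<times>{..<N})"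
    using L2_set_triangle_ineq[of "\<lambda>(i,j). \<alpha> * e i j" "\<lambda>(i,j). \<beta> * (d i j * s j)"]
    by (simp add: case_prod_unfold)
  also have "L2_set (\<lambda>(i,j). \<alpha> * e i j) ({..<N}\<times>{..<N}) = \<alpha> * F2 N e"
    unfolding F2_L2 using L2_set_right_distrib[OF ab(1), of "\<lambda>(i,j). e i j"]
    by (simp add: case_prod_unfold)
  also have "L2_set (\<lambda>(i,j). \<beta> * (d i j * s j)) ({..<N}\<times>{..<N}) = \<beta> * F2 N (\<lambda>i j. d i j * s j)"
    unfolding F2_L2 using L2_set_right_distrib[OF ab(2), of "\<lambda>(i,j). d i j * s j"]
    by (simp add: case_prod_unfold)
  also have "F2 N (\<lambda>i j. d i j * s j) \<le> sqrt (real N) * F2 N d * F2 N e"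
  proof -
    have sj: "(s j)\<^sup>2 \<le> real N * (F2 N e)\<^sup>2" if "j < N" for j
    proof -
      have "(s j)\<^sup>2 \<le> (\<Sum>k<N. (e k j)\<^sup>2) * real N"
        unfolding s_def using sum_squared_le_sum_of_squares[of "\<lambda>k. e k j" "{..<N}"] by simp
      also have "\<dots> \<le> (F2 N e)\<^sup>2 * real N" using col_le[OF that, of e] by (simp add: mult_right_mono)
      finally show ?thesis by (simp add: mult.commute)
    qed
    have "(\<Sum>i<N. \<Sum>j<N. (d i j * s j)\<^sup>2) \<le> (\<Sum>i<N. \<Sum>j<N. (d i j)\<^sup>2 * (real N * (F2 N e)\<^sup>2))"
      by (intro sum_mono) (simp add: power_mult_distrib mult_left_mono sj)
    also have "\<dots> = (real N * (F2 N e)\<^sup>2) * (F2 N d)\<^sup>2"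
    proof -
      have "(\<Sum>i<N. \<Sum>j<N. (d i j)\<^sup>2 * K) = (F2 N d)\<^sup>2 * K" for K
        unfolding F2_def by (simp add: sum_nonneg sum_distrib_right)
      from this[of "real N * (F2 N e)\<^sup>2"] show ?thesis by (simp only: mult.commute)
    qed
    finally have "(\<Sum>i<N. \<Sum>j<N. (d i j * s j)\<^sup>2) \<le> (sqrt (real N) * F2 N d * F2 N e)\<^sup>2"
      by (simp add: power_mult_distrib mult_ac)
    then have "sqrt (\<Sum>i<N. \<Sum>j<N. (d i j * s j)\<^sup>2) \<le> sqrt ((sqrt (real N) * F2 N d * F2 N e)\<^sup>2)"
      by (rule real_sqrt_le_mono)
    then show ?thesis unfolding F2_def[of N "\<lambda>i j. d i j * s j"]
      using F2_nonneg[of N d] F2_nonneg[of N e] by simp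
  qed
  finally show ?thesis using ab(2) by (simp add: mult_left_mono)
qed



lemma frob_F2: "frob_diff N Y = F2 N (\<lambda>i j. norm (Y i - Y j))"
  unfolding frob_diff_def F2_def ..

lemma vel_identity:
  fixes V' Vn :: "nat \<Rightarrow> real ^ 'd" and ph :: "nat \<Rightarrow> nat \<Rightarrow> real"
  assumes V': "\<And>i. i < N \<Longrightarrow> V' i = Vn i + t *\<^sub>R (\<Sum>k<N. ph i k *\<^sub>R (Vn k - Vn i))"
    and ps: "\<And>i. i < N \<Longrightarrow> (\<Sum>k<N. ph i k) = 1"
    and ij: "i < N" "j < N"
  shows "V' i - V' j = (1 - t) *\<^sub>R (Vn i - Vn j) + t *\<^sub>R (\<Sum>k<N. (ph i k - ph j k) *\<^sub>R (Vn k - Vn j))"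
proof -
  have si: "(\<Sum>k<N. ph i k *\<^sub>R (Vn k - Vn i)) = (\<Sum>k<N. ph i k *\<^sub>R (Vn k - Vn j)) - (Vn i - Vn j)"
  proof -
    have "(\<Sum>k<N. ph i k *\<^sub>R (Vn k - Vn i)) = (\<Sum>k<N. ph i k *\<^sub>R (Vn k - Vn j) - ph i k *\<^sub>R (Vn i - Vn j))"
      by (rule sum.cong) (auto simp: algebra_simps)
    also have "\<dots> = (\<Sum>k<N. ph i k *\<^sub>R (Vn k - Vn j)) - (\<Sum>k<N. ph i k) *\<^sub>R (Vn i - Vn j)"
      by (simp add: sum_subtractf scaleR_sum_left)
    finally show ?thesis using ps[OF ij(1)] by simp
  qed
  define A where "A = (\<Sum>k<N. ph i k *\<^sub>R (Vn k - Vn j))"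
  define B where "B = (\<Sum>k<N. ph j k *\<^sub>R (Vn k - Vn j))"
  have ab: "(\<Sum>k<N. (ph i k - ph j k) *\<^sub>R (Vn k - Vn j)) = A - B"
    unfolding A_def B_def by (simp add: scaleR_diff_left sum_subtractf)
  have vi: "V' i = Vn i + t *\<^sub>R (A - (Vn i - Vn j))" using V'[OF ij(1)] si unfolding A_def by simp
  have vj: "V' j = Vn j + t *\<^sub>R B" using V'[OF ij(2)] unfolding B_def by simp
  show ?thesis unfolding ab vi vj by (simp add: algebra_simps)
qed

lemma vel_pair:
  fixes V' Vn :: "nat \<Rightarrow> real ^ 'd" and ph :: "nat \<Rightarrow> nat \<Rightarrow> real"
  assumes V': "\<And>i. i < N \<Longrightarrow> V' i = Vn i + t *\<^sub>R (\<Sum>k<N. ph i k *\<^sub>R (Vn k - Vn i))"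
    and ps: "\<And>i. i < N \<Longrightarrow> (\<Sum>k<N. ph i k) = 1"
    and pd: "\<And>k. k < N \<Longrightarrow> \<bar>ph i k - ph j k\<bar> \<le> q * dd"
    and t: "0 \<le> t" "t \<le> 1"
    and ij: "i < N" "j < N"
  shows "norm (V' i - V' j) \<le> (1 - t) * norm (Vn i - Vn j) + t * (q * dd * (\<Sum>k<N. norm (Vn k - Vn j)))"
proof -
  have "norm (\<Sum>k<N. (ph i k - ph j k) *\<^sub>R (Vn k - Vn j)) \<le> (\<Sum>k<N. norm ((ph i k - ph j k) *\<^sub>R (Vn k - Vn j)))"
    by (rule norm_sum)
  also have "\<dots> \<le> (\<Sum>k<N. q * dd * norm (Vn k - Vn j))"
    by (rule sum_mono) (simp add: mult_right_mono pd)
  finally have b: "norm (\<Sum>k<N. (ph i k - ph j k) *\<^sub>R (Vn k - Vn j)) \<le> q * dd * (\<Sum>k<N. norm (Vn k - Vn j))"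
    by (simp add: sum_distrib_left)
  have eq: "V' i - V' j = (1 - t) *\<^sub>R (Vn i - Vn j) + t *\<^sub>R (\<Sum>k<N. (ph i k - ph j k) *\<^sub>R (Vn k - Vn j))"
    by (rule vel_identity) (use V' ps ij in auto)
  have "norm (V' i - V' j) \<le> norm ((1 - t) *\<^sub>R (Vn i - Vn j)) + norm (t *\<^sub>R (\<Sum>k<N. (ph i k - ph j k) *\<^sub>R (Vn k - Vn j)))"
    unfolding eq by (rule norm_triangle_ineq)
  also have "\<dots> = (1 - t) * norm (Vn i - Vn j) + t * norm (\<Sum>k<N. (ph i k - ph j k) *\<^sub>R (Vn k - Vn j))"
    using t by simp
  also have "\<dots> \<le> (1 - t) * norm (Vn i - Vn j) + t * (q * dd * (\<Sum>k<N. norm (Vn k - Vn j)))"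
    using b t by (simp add: mult_left_mono)
  finally show ?thesis .
qed

lemma vel_step:
  fixes X V :: "nat \<Rightarrow> nat \<Rightarrow> real ^ 'd"
  assumes sol: "MT_solution N \<kappa> h a X V"
    and t: "0 \<le> h * \<kappa>" "h * \<kappa> \<le> 1"
    and N: "N \<ge> 1" and c: "0 < c1" and a_bd: "\<And>r. r \<ge> 0 \<Longrightarrow> c1 \<le> a r \<and> a r \<le> c2"
    and a_lip: "\<And>r1 r2. r1 \<ge> 0 \<Longrightarrow> r2 \<ge> 0 \<Longrightarrow> \<bar>a r1 - a r2\<bar> \<le> La * \<bar>r1 - r2\<bar>"
    and La: "La \<ge> 0" and c2: "c1 \<le> c2"
  shows "frob_diff N (V (Suc n)) \<le> (1 - h * \<kappa> * (1 - phi_lip N c1 c2 La * real N * frob_diff N (X n))) * frob_diff N (V n)"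
proof -
  define p where "p = phi_lip N c1 c2 La"
  have p0: "p \<ge> 0" unfolding p_def phi_lip_def using La c c2 N by simp
  define ph where "ph = phi_w N a (X n)"
  have V': "\<And>i. i < N \<Longrightarrow> V (Suc n) i = V n i + (h * \<kappa>) *\<^sub>R (\<Sum>k<N. ph i k *\<^sub>R (V n k - V n i))"
    using sol unfolding MT_solution_def ph_def by blast
  have ps: "\<And>i. i < N \<Longrightarrow> (\<Sum>k<N. ph i k) = 1"
    unfolding ph_def by (rule phi_sum[OF N c a_bd])
  define e where "e i j = norm (V n i - V n j)" for i j
  define d where "d i j = norm (X n i - X n j)" for i j
  have pair: "0 \<le> norm (V (Suc n) i - V (Suc n) j) \<and> norm (V (Suc n) i - V (Suc n) j)
      \<le> (1 - h * \<kappa>) * e i j + (h * \<kappa> * p) * (d i j * (\<Sum>k<N. e k j))" if "i < N" "j < N" for i j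
    using vel_pair[OF V' ps _ t that, of "p" "d i j"] phi_diff[OF N c a_bd a_lip La, of "X n" i _ j]
    unfolding e_def d_def ph_def p_def by (simp add: mult_ac)
  have "frob_diff N (V (Suc n)) \<le> (1 - h * \<kappa>) * F2 N e + (h * \<kappa> * p) * (sqrt (real N) * F2 N d * F2 N e)"
    unfolding frob_F2 by (rule F2_agg) (use t p0 pair in \<open>auto simp: e_def d_def\<close>)
  also have "\<dots> \<le> (1 - h * \<kappa>) * F2 N e + (h * \<kappa> * p) * (real N * F2 N d * F2 N e)"
  proof -
    have "sqrt (real N) \<le> real N"
    proof -
      have 1: "1 \<le> sqrt (real N)" using N by simp
      have "sqrt (real N) * 1 \<le> sqrt (real N) * sqrt (real N)"
        by (rule mult_left_mono[OF 1]) simp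
      then show ?thesis by simp
    qed
    then show ?thesis using t p0 F2_nonneg[of N d] F2_nonneg[of N e]
      by (intro add_left_mono mult_left_mono mult_right_mono) auto
  qed
  also have "\<dots> = (1 - h * \<kappa> * (1 - p * real N * F2 N d)) * F2 N e"
    by (simp add: algebra_simps)
  finally show ?thesis unfolding frob_F2 p_def e_def d_def .
qed



lemma frob_cong: "(\<And>i. i < N \<Longrightarrow> Y i = Z i) \<Longrightarrow> frob_diff N Y = frob_diff N Z"
  unfolding frob_diff_def by (intro arg_cong[where f=sqrt] sum.cong) auto

lemma frob_nonneg: "frob_diff N Y \<ge> 0"
  unfolding frob_diff_def by (simp add: sum_nonneg)

lemma integral_psi:
  assumes "a \<le> b"
  shows "integral {a..b} (psi N c1 c2 La) =
     (b - phi_lip N c1 c2 La * real N * b\<^sup>2 / 2) - (a - phi_lip N c1 c2 La * real N * a\<^sup>2 / 2)"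
proof -
  define q where "q = phi_lip N c1 c2 La * real N"
  have "((\<lambda>s. s - q * s\<^sup>2 / 2) has_real_derivative (1 - q * x)) (at x within {a..b})" for x
    by (auto intro!: derivative_eq_intros simp: power2_eq_square)
  then have "(psi N c1 c2 La has_integral ((b - q * b\<^sup>2 / 2) - (a - q * a\<^sup>2 / 2))) {a..b}"
    using fundamental_theorem_of_calculus[OF assms, of "\<lambda>s. s - q * s\<^sup>2 / 2" "psi N c1 c2 La"]
    unfolding psi_def q_def has_real_derivative_iff_has_vector_derivative by simp
  then show ?thesis unfolding q_def by (rule integral_unique)
qed

lemma quad_fact:
  fixes q M s :: real
  assumes "q > 0" "q * M = 1/4" "0 \<le> s" "s < 2 * M" "s - q * s\<^sup>2 / 2 < M - q * M\<^sup>2 / 2"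
  shows "s \<le> M"
proof (rule ccontr)
  assume "\<not> s \<le> M"
  then have sM: "s - M > 0" by simp
  have "q * s < q * (2 * M)" using assms by (intro mult_strict_left_mono) auto
  moreover have "q * (2 * M) = 1/2" using assms(2) by (simp add: mult.left_commute)
  moreover have "q * (s + M) = q * s + q * M" by (simp add: distrib_left)
  ultimately have "q * (s + M) < 3/4" using assms(2) by linarith
  then have "1 - q * (s + M) / 2 > 0" by simp
  with sM have "(s - M) * (1 - q * (s + M) / 2) > 0" by simp
  moreover have "(s - M) * (1 - q * (s + M) / 2) = (s - q * s\<^sup>2 / 2) - (M - q * M\<^sup>2 / 2)"
    unfolding power2_eq_square by (simp add: field_simps)
  ultimately show False using assms(5) by simp
qed

lemma core:
  fixes X V :: "nat \<Rightarrow> nat \<Rightarrow> real ^ 'd"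
  assumes N: "N \<ge> 1"
    and kappa: "\<kappa> > 0"
    and c: "0 < c1" "c1 \<le> c2"
    and a_bd: "\<And>r. r \<ge> 0 \<Longrightarrow> c1 \<le> a r \<and> a r \<le> c2"
    and La: "La > 0"
    and a_lip: "\<And>r1 r2. r1 \<ge> 0 \<Longrightarrow> r2 \<ge> 0 \<Longrightarrow> \<bar>a r1 - a r2\<bar> \<le> La * \<bar>r1 - r2\<bar>"
    and init_x: "frob_diff N xa < M_const N c1 c2 La"
    and init_v: "frob_diff N va < \<kappa> * integral {frob_diff N xa .. M_const N c1 c2 La} (psi N c1 c2 La)"
    and h: "0 < h" "h < min 1 (1 / \<kappa>)"
    and sol: "MT_solution N \<kappa> h a X V"
    and ini: "\<forall>i<N. X 0 i = xa i \<and> V 0 i = va i"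
  shows "frob_diff N (X n) \<le> M_const N c1 c2 La \<and>
         frob_diff N (V (Suc n)) \<le> (1 - h * \<kappa> * psi N c1 c2 La (M_const N c1 c2 La)) * frob_diff N (V n)"
proof -
  define p where "p = phi_lip N c1 c2 La"
  define q where "q = p * real N"
  define M where "M = M_const N c1 c2 La"
  define Psi where "Psi s = s - q * s\<^sup>2 / 2" for s
  define Dx where "Dx n = frob_diff N (X n)" for n
  define Dv where "Dv n = frob_diff N (V n)" for n
  define D0 where "D0 = frob_diff N xa"
  define W0 where "W0 = frob_diff N va"
  have p0: "p > 0"
  proof -
    have a1: "1 + c2 / c1 > 0" using c by (simp add: add_pos_nonneg)
    have a2: "La / (real N * c1) > 0" using La c N by simp
    show ?thesis unfolding p_def phi_lip_def by (rule mult_pos_pos[OF a2 a1])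
  qed
  have q0: "q > 0" unfolding q_def using p0 N by simp
  have qM: "q * M = 1/4" using p0 N unfolding q_def M_def M_const_def p_def[symmetric] by simp
  have M0: "M > 0" using qM q0 by (metis zero_less_mult_iff less_le_not_le zero_less_divide_1_iff zero_less_numeral)
  have psiM: "psi N c1 c2 La M = 3/4" unfolding psi_def using qM unfolding q_def p_def by simp
  have psis: "psi N c1 c2 La s = 1 - q * s" for s unfolding psi_def q_def p_def by simp
  have Dxa: "Dx 0 = D0" unfolding Dx_def D0_def by (rule frob_cong) (use ini in auto)
  have Dva: "Dv 0 = W0" unfolding Dv_def W0_def by (rule frob_cong) (use ini in auto)
  have Dxnn: "Dx n \<ge> 0" for n unfolding Dx_def by (rule frob_nonneg)
  have Dvnn: "Dv n \<ge> 0" for n unfolding Dv_def by (rule frob_nonneg)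
  have D0M: "D0 < M" using init_x unfolding D0_def M_def .
  have D00: "D0 \<ge> 0" unfolding D0_def by (rule frob_nonneg)
  have W0b: "W0 < \<kappa> * (Psi M - Psi D0)"
    using init_v integral_psi[of D0 M N c1 c2 La] D0M
    unfolding W0_def D0_def M_def Psi_def q_def p_def by simp
  have hk: "0 < h * \<kappa>" "h * \<kappa> < 1"
    using h kappa by (auto simp: field_simps)
  have xs: "Dx (Suc n) \<le> Dx n + h * Dv n" for n
  proof -
    have "Dx (Suc n) = frob_diff N (\<lambda>i. X n i + h *\<^sub>R V n i)"
      unfolding Dx_def by (rule frob_cong) (use sol in \<open>auto simp: MT_solution_def\<close>)
    then show ?thesis using frob_x_step[of h N "X n" "V n"] h unfolding Dx_def Dv_def by simp
  qed
  have vs: "Dv (Suc n) \<le> (1 - h * \<kappa> * (1 - q * Dx n)) * Dv n" for n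
    using vel_step[OF sol _ _ N c(1) a_bd a_lip _ c(2), of n] hk La
    unfolding Dv_def Dx_def q_def p_def by (simp add: mult_ac)
  have Psi0: "Psi D0 \<ge> 0"
  proof -
    have "q * D0 \<le> 1/4" using qM D0M q0 by (metis less_eq_real_def mult_left_mono)
    then have "Psi D0 = D0 * (1 - q * D0 / 2)" unfolding Psi_def by (simp add: algebra_simps power2_eq_square)
    moreover have "1 - q * D0 / 2 \<ge> 0" using \<open>q * D0 \<le> 1/4\<close> by simp
    ultimately show ?thesis using D00 by simp
  qed
  have PsiM: "Psi M = 7/8 * M" unfolding Psi_def using qM by (simp add: power2_eq_square algebra_simps)
  have inv: "Dx n \<le> M \<and> Dv n \<le> W0 \<and> Dv n + \<kappa> * Psi (Dx n) \<le> W0 + \<kappa> * Psi D0" for n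
  proof (induction n)
    case 0
    then show ?case using Dxa Dva D0M by simp
  next
    case (Suc n)
    then have IH: "Dx n \<le> M" "Dv n \<le> W0" "Dv n + \<kappa> * Psi (Dx n) \<le> W0 + \<kappa> * Psi D0" by auto
    define ps where "ps = 1 - q * Dx n"
    have ps0: "ps \<ge> 3/4"
    proof -
      have "q * Dx n \<le> q * M" using IH(1) q0 by (intro mult_left_mono) auto
      then show ?thesis unfolding ps_def using qM by linarith
    qed
    have v1: "Dv (Suc n) \<le> (1 - h * \<kappa> * ps) * Dv n" using vs[of n] unfolding ps_def .
    have v2: "(1 - h * \<kappa> * ps) * Dv n \<le> Dv n"
    proof -
      have "h * \<kappa> * ps \<ge> 0" using hk ps0 by simp
      then have "1 - h * \<kappa> * ps \<le> 1" by simp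
      then show ?thesis using Dvnn[of n] by (metis mult_right_mono mult_1)
    qed
    have conc: "Psi (Dx (Suc n)) \<le> Psi (Dx n) + ps * (Dx (Suc n) - Dx n)"
    proof -
      have "Psi (Dx (Suc n)) - Psi (Dx n) - ps * (Dx (Suc n) - Dx n) = - (q/2) * (Dx (Suc n) - Dx n)\<^sup>2"
        unfolding Psi_def ps_def by (simp add: algebra_simps power2_eq_square)
      moreover have "- (q/2) * (Dx (Suc n) - Dx n)\<^sup>2 \<le> 0" using q0 by simp
      ultimately show ?thesis by simp
    qed
    have "ps * (Dx (Suc n) - Dx n) \<le> ps * (h * Dv n)"
      using xs[of n] ps0 by (intro mult_left_mono) auto
    with conc have P1: "Psi (Dx (Suc n)) \<le> Psi (Dx n) + ps * (h * Dv n)" by simp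
    have L: "Dv (Suc n) + \<kappa> * Psi (Dx (Suc n)) \<le> Dv n + \<kappa> * Psi (Dx n)"
    proof -
      have "\<kappa> * Psi (Dx (Suc n)) \<le> \<kappa> * (Psi (Dx n) + ps * (h * Dv n))"
        using P1 kappa by (intro mult_left_mono) auto
      then show ?thesis using v1 by (simp add: algebra_simps)
    qed
    have Lb: "Dv (Suc n) + \<kappa> * Psi (Dx (Suc n)) \<le> W0 + \<kappa> * Psi D0" using L IH(3) by simp
    have "h * Dv n \<le> h * W0" using IH(2) h by simp
    also have "h * W0 \<le> h * \<kappa> * (Psi M - Psi D0)" using W0b h by simp
    also have "\<dots> \<le> 1 * (Psi M - Psi D0)"
    proof -
      have "\<kappa> * (Psi M - Psi D0) > 0" using W0b Dva Dvnn[of 0] by simp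
      then have "Psi M - Psi D0 > 0" using kappa by (simp add: zero_less_mult_iff)
      then show ?thesis using hk by (intro mult_right_mono) auto
    qed
    finally have hD: "h * Dv n \<le> Psi M" using Psi0 by simp
    have x2: "Dx (Suc n) < 2 * M" using xs[of n] IH(1) hD PsiM M0 by simp
    have "\<kappa> * Psi (Dx (Suc n)) < \<kappa> * Psi M"
      using Lb W0b Dvnn[of "Suc n"] by (simp add: algebra_simps)
    then have "Psi (Dx (Suc n)) < Psi M" using kappa by simp
    then have x1: "Dx (Suc n) \<le> M"
      using quad_fact[OF q0 qM Dxnn x2] unfolding Psi_def by simp
    show ?case using x1 v1 v2 IH(2) Lb by simp
  qed
  have "Dv (Suc n) \<le> (1 - h * \<kappa> * (3/4)) * Dv n"
  proof -
    have "q * Dx n \<le> q * M" using inv[of n] q0 by (intro mult_left_mono) auto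
    then have "1 - q * Dx n \<ge> 3/4" using qM by linarith
    then have "h * \<kappa> * (3/4) \<le> h * \<kappa> * (1 - q * Dx n)"
      using hk by (intro mult_left_mono) auto
    then have "(1 - h * \<kappa> * (1 - q * Dx n)) * Dv n \<le> (1 - h * \<kappa> * (3/4)) * Dv n"
      using Dvnn[of n] by (intro mult_right_mono) auto
    then show ?thesis using vs[of n] by simp
  qed
  moreover have ps34: "psi N c1 c2 La (M_const N c1 c2 La) = 3/4" using psiM unfolding M_def .
  ultimately show ?thesis using inv[of n] unfolding ps34 Dx_def Dv_def M_def by simp
qed



theorem theorem3p4:
  fixes N :: nat and \<kappa> c1 c2 La :: real and a :: "real \<Rightarrow> real"
    and x0 v0 :: "nat \<Rightarrow> real ^ 'd"
  assumes N: "N \<ge> 1"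
    and kappa: "\<kappa> > 0"
    and c: "0 < c1" "c1 \<le> c2"
    and a_bd: "\<And>r. r \<ge> 0 \<Longrightarrow> c1 \<le> a r \<and> a r \<le> c2"
    and La: "La > 0"
    and a_lip: "\<And>r1 r2. r1 \<ge> 0 \<Longrightarrow> r2 \<ge> 0 \<Longrightarrow> \<bar>a r1 - a r2\<bar> \<le> La * \<bar>r1 - r2\<bar>"
    and init_x: "frob_diff N x0 < M_const N c1 c2 La"
    and init_v: "frob_diff N v0 < \<kappa> * integral {frob_diff N x0 .. M_const N c1 c2 La} (psi N c1 c2 La)"
  shows "(\<forall>h X V. 0 < h \<and> h < min 1 (1 / \<kappa>) \<and> MT_solution N \<kappa> h a X V
            \<and> (\<forall>i<N. X 0 i = x0 i \<and> V 0 i = v0 i)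
            \<longrightarrow> (\<forall>n. frob_diff N (X n) \<le> M_const N c1 c2 La))
       \<and> (\<forall>C. 0 < C \<and> C < 1 \<longrightarrow>
           (\<exists>h0 > 0. \<forall>h X V. 0 < h \<and> h < h0 \<and> h < min 1 (1 / \<kappa>) \<and> MT_solution N \<kappa> h a X V
               \<and> (\<forall>i<N. X 0 i = x0 i \<and> V 0 i = v0 i)
               \<longrightarrow> (\<forall>n. frob_diff N (V n) \<le> frob_diff N v0 *
                     exp (- C * \<kappa> * psi N c1 c2 La (M_const N c1 c2 La) * real n * h))))"
proof -
  have co: "frob_diff N (X m) \<le> M_const N c1 c2 La \<and>
         frob_diff N (V (Suc m)) \<le> (1 - h * \<kappa> * psi N c1 c2 La (M_const N c1 c2 La)) * frob_diff N (V m)"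
    if "0 < h" "h < min 1 (1 / \<kappa>)" "MT_solution N \<kappa> h a X V" "\<forall>i<N. X 0 i = x0 i \<and> V 0 i = v0 i"
    for h and X V :: "nat \<Rightarrow> nat \<Rightarrow> real ^ 'd" and m
    by (rule core[where xa=x0 and va=v0]) (use assms that in auto)
  define P where "P = psi N c1 c2 La (M_const N c1 c2 La)"
  have P34: "P = 3/4"
  proof -
    define p where "p = phi_lip N c1 c2 La"
    have a1: "1 + c2 / c1 > 0" using c by (simp add: add_pos_nonneg)
    have a2: "La / (real N * c1) > 0" using La c N by simp
    have p0: "p > 0" unfolding p_def phi_lip_def by (rule mult_pos_pos[OF a2 a1])
    show ?thesis unfolding P_def psi_def M_const_def p_def[symmetric] using p0 N by simp
  qed
  have part2: "frob_diff N (V n) \<le> frob_diff N v0 * exp (- C * \<kappa> * P * real n * h)"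
    if h: "0 < h" "h < min 1 (1 / \<kappa>)" and sol: "MT_solution N \<kappa> h a X V"
      and ini: "\<forall>i<N. X 0 i = x0 i \<and> V 0 i = v0 i" and C: "0 < C" "C < 1" for h X V C n
  proof -
    define r where "r = 1 - h * \<kappa> * P"
    have hk: "0 < h * \<kappa>" "h * \<kappa> < 1"
      using h kappa by (auto simp: field_simps)
    have r0: "r \<ge> 0" unfolding r_def P34 using hk by simp
    have step: "frob_diff N (V (Suc m)) \<le> r * frob_diff N (V m)" for m
      using co[OF h sol ini, of m] unfolding r_def P_def by simp
    have V0: "frob_diff N (V 0) = frob_diff N v0" by (rule frob_cong) (use ini in auto)
    have ind: "frob_diff N (V m) \<le> r ^ m * frob_diff N v0" for m
    proof (induction m)
      case 0 then show ?case using V0 by simp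
    next
      case (Suc m)
      have "frob_diff N (V (Suc m)) \<le> r * frob_diff N (V m)" by (rule step)
      also have "\<dots> \<le> r * (r ^ m * frob_diff N v0)" using Suc r0 by (rule mult_left_mono)
      finally show ?case by (simp add: mult_ac)
    qed
    have "r \<le> exp (- (h * \<kappa> * P))" unfolding r_def using exp_ge_add_one_self[of "- (h * \<kappa> * P)"] by simp
    then have "r ^ n \<le> exp (- (h * \<kappa> * P)) ^ n" using r0 by (rule power_mono)
    also have "\<dots> = exp (real n * (- (h * \<kappa> * P)))" by (rule exp_of_nat_mult[symmetric])
    also have "\<dots> \<le> exp (- C * \<kappa> * P * real n * h)"
    proof -
      have "0 \<le> h * \<kappa> * P * real n" using hk P34 by simp
      then have "C * (h * \<kappa> * P * real n) \<le> 1 * (h * \<kappa> * P * real n)"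
        using C by (intro mult_right_mono) auto
      then show ?thesis by (simp add: mult_ac)
    qed
    finally have "r ^ n \<le> exp (- C * \<kappa> * P * real n * h)" .
    then have "r ^ n * frob_diff N v0 \<le> exp (- C * \<kappa> * P * real n * h) * frob_diff N v0"
      using frob_nonneg[of N v0] by (rule mult_right_mono)
    with ind[of n] show ?thesis by (simp add: mult.commute)
  qed
  show ?thesis
  proof (intro conjI allI impI)
    fix h X V n
    assume "0 < h \<and> h < min 1 (1 / \<kappa>) \<and> MT_solution N \<kappa> h a X V \<and> (\<forall>i<N. X 0 i = x0 i \<and> V 0 i = v0 i)"
    then show "frob_diff N (X n) \<le> M_const N c1 c2 La" using co by blast
  next
    fix C :: real
    assume C: "0 < C \<and> C < 1"
    show "\<exists>h0>0. \<forall>h X V. 0 < h \<and> h < h0 \<and> h < min 1 (1 / \<kappa>) \<and> MT_solution N \<kappa> h a X V \<and>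
              (\<forall>i<N. X 0 i = x0 i \<and> V 0 i = v0 i) \<longrightarrow>
              (\<forall>n. frob_diff N (V n) \<le> frob_diff N v0 *
                  exp (- C * \<kappa> * psi N c1 c2 La (M_const N c1 c2 La) * real n * h))"
      using part2 C unfolding P_def by (intro exI[of _ 1]) auto
  qed
qed

end
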